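(* Let $\Pi$ be an ASP(LC) program, let $\sigma^p$ be the set of propositional atoms occurring in $\Pi$ and $\sigma^f$ the set of object constants occurring in $\Pi$ that do not belong to the background signature $\sigma^{bg}$ (the theory of integers or of reals), and identify $\Pi$ with the conjunction of the formulas $B\land N\land LC\rightarrow a$ over all its rules. (a) If $(X,T)$ is an LJN-answer set of $\Pi$, then for every interpretation $\langle I^f,X\rangle$ of $\sigma^p\cup\sigma^f$ such that $I^f\models_{bg}T\cup\overline{T}$, we have $\langle I^f,X\rangle\models_{bg}\mathrm{SM}[\Pi;\sigma^p]$. (b) For every interpretation $I=\langle I^f,X\rangle$ of $\sigma^p\cup\sigma^f$, if $\langle I^f,X\rangle\models_{bg}\mathrm{SM}[\Pi;\sigma^p]$, then the LJN-interpretation $(X,T)$ with $T=\{t\mid t\text{ is a theory atom of }\Pi\text{ and }I^f\models_{bg}t\}$ is an LJN-answer set of $\Pi$.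
   Context: Formulas are (possibly many-sorted) first-order formulas built from $\bot,\land,\lor,\rightarrow,\forall,\exists$; $\neg F$ abbreviates $F\rightarrow\bot$, $\top$ abbreviates $\neg\bot$. Stable model operator. For predicate symbols $u,c$ of the same arity, $u\le c$ denotes $\forall\mathbf{x}(u(\mathbf{x})\rightarrow c(\mathbf{x}))$; $u=c$ denotes $\forall\mathbf{x}(u(\mathbf{x})\leftrightarrow c(\mathbf{x}))$ if $u,c$ are predicate symbols and $\forall\mathbf{x}(u(\mathbf{x})=c(\mathbf{x}))$ if they are function symbols; for lists these are conjunctions of the componentwise expressions. Let $\mathbf{c}$ be a list of distinct predicate and function constants and $\widehat{\mathbf{c}}$ a list of distinct predicate and function variables corresponding to $\mathbf{c}$. Write $\mathbf{c}^{pred}$, $\widehat{\mathbf{c}}^{pred}$ for the sublists of predicate symbols. $\widehat{\mathbf{c}}<\mathbf{c}$ abbreviates $(\widehat{\mathbf{c}}^{pred}\le\mathbf{c}^{pred})\land\neg(\widehat{\mathbf{c}}=\mathbf{c})$. For a formula $F$, $F^*(\widehat{\mathbf{c}})$ is defined recursively: if $F$ is atomic (including $\bot$), $F^*=F'\land F$ where $F'$ is obtained from $F$ by replacing every intensional constant from $\mathbf{c}$ by the corresponding variable from $\widehat{\mathbf{c}}$; $(G\land H)^*=G^*\land H^*$; $(G\lor H)^*=G^*\lor H^*$; $(G\rightarrow H)^*=(G^*\rightarrow H^* )\land(G\rightarrow H)$; $(\forall xG)^*=\forall xG^*$; $(\exists xG)^*=\exists xG^*$. Then $\mathrm{SM}[F;\mathbf{c}]$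 is the second-order formula $F\land\neg\exists\widehat{\mathbf{c}}(\widehat{\mathbf{c}}<\mathbf{c}\land F^*(\widehat{\mathbf{c}}))$. Background theory. Let $\sigma^{bg}$ be the (many-sorted) signature of a background theory $bg$; an interpretation of $\sigma^{bg}$ satisfying $bg$ is a background interpretation. For a signature $\sigma$ disjoint from $\sigma^{bg}$, an interpretation $I$ of $\sigma$ satisfies a (possibly second-order) sentence $F$ w.r.t. $bg$, written $I\models_{bg}F$, if there is a background interpretation $J$ of $\sigma^{bg}$ with the same universe as $I$ such that $I\cup J\models F$. For a signature of object and propositional constants, an interpretation is identified with $\langle I^f,X\rangle$, where $I^f$ is its restriction to the object constants and $X$ the set of propositional constants it makes true. ASP(LC) programs. An ASP(LC) program is a set of rules $a\leftarrow B,N,LC$, where $a$ is a propositional atom or $\bot$, $B$ is a set of propositional atoms, $N$ is a set of negative literals $\mathit{not}\ c$ ($c$ a propositional atom), and $LC$ is a set of theory atoms, i.e. linear constraints $\sum_{i=1}^n c_i\times x_i\bowtie k$ with $\bowtie\in\{\le,\ge,=\}$, each $x_i$ an object constant of sort integers (resp. reals) and $c_i,k$ integers (resp. reals); theory atoms are sentences of $\sigma^f\cup\sigma^{bg}$. As a formula, commas are conjunctions and $\mathit{not}$ is $\neg$. An LJN-interpretation is a pair $(X,T)$ with $X\subseteq\sigma^p$ and $T$ a subset of the theory atoms occurring in $\Pi$ such that some interpretation $I$ of $\sigma^f$ satisfies $I\models_{bg}T\cup\overline{T}$, where $\overline{T}$ is the set of negations of the theory atoms occurring in $\Pi$ but not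 in $T$. $(X,T)$ satisfies an atom $b$ iff $b\in X$, a literal $\mathit{not}\ c$ iff $c\notin X$, a theory atom $t$ iff $t\in T$, and compound formulas as usual. The LJN-reduct $\Pi^{(X,T)}$ consists of the rules $a\leftarrow B$ for each rule $a\leftarrow B,N,LC$ of $\Pi$ such that $(X,T)$ satisfies $N\land LC$. $(X,T)$ is an LJN-answer set of $\Pi$ if $(X,T)$ satisfies $\Pi$ and $X$ is the smallest set of atoms satisfying $\Pi^{(X,T)}$. *)

theory Defs
  imports Main
begin

datatype rel = Le | Ge | Eq

text \<open>A theory atom  sum_i c_i * x_i REL k ; x_i object constants of type 'c,
  coefficients and k numbers of the background sort 'n (integers or reals).\<close>
datatype ('c, 'n) lc = LinC "('n \<times> 'c) list" rel 'n

fun lc_holds :: "('c \<Rightarrow> 'n::linordered_idom) \<Rightarrow> ('c, 'n) lc \<Rightarrow> bool" where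
  "lc_holds Ifn (LinC cs r k) =
     (let s = (\<Sum>(a, x) \<leftarrow> cs. a * Ifn x) in
      (case r of Le \<Rightarrow> s \<le> k | Ge \<Rightarrow> s \<ge> k | Eq \<Rightarrow> s = k))"

datatype ('p, 't) atm = PA 'p | HA 'p | TA 't
  \<comment> \<open>PA p: intensional atom p; HA p: the corresponding variable p-hat; TA t: theory atom\<close>

datatype 'a fm = Bot | Atom 'a | And "'a fm" "'a fm" | Or "'a fm" "'a fm" | Imp "'a fm" "'a fm"

definition Neg :: "'a fm \<Rightarrow> 'a fm" where "Neg F = Imp F Bot"
definition Top :: "'a fm" where "Top = Neg Bot"

fun conj_list :: "'a fm list \<Rightarrow> 'a fm" where
  "conj_list [] = Top"
| "conj_list [F] = F"
| "conj_list (F # Fs) = And F (conj_list Fs)"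

text \<open>Evaluation: Tv gives the truth values of theory atoms, X interprets the
  intensional atoms, Y interprets their hatted counterparts.\<close>
fun eval :: "('t \<Rightarrow> bool) \<Rightarrow> 'p set \<Rightarrow> 'p set \<Rightarrow> ('p, 't) atm fm \<Rightarrow> bool" where
  "eval Tv X Y Bot = False"
| "eval Tv X Y (Atom (PA p)) = (p \<in> X)"
| "eval Tv X Y (Atom (HA p)) = (p \<in> Y)"
| "eval Tv X Y (Atom (TA t)) = Tv t"
| "eval Tv X Y (And F G) = (eval Tv X Y F \<and> eval Tv X Y G)"
| "eval Tv X Y (Or F G) = (eval Tv X Y F \<or> eval Tv X Y G)"
| "eval Tv X Y (Imp F G) = (eval Tv X Y F \<longrightarrow> eval Tv X Y G)"

text \<open>F* w.r.t. the intensional constants sigma^p (only the PA atoms are intensional).\<close>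
fun star :: "('p, 't) atm fm \<Rightarrow> ('p, 't) atm fm" where
  "star Bot = And Bot Bot"
| "star (Atom (PA p)) = And (Atom (HA p)) (Atom (PA p))"
| "star (Atom a) = And (Atom a) (Atom a)"
| "star (And F G) = And (star F) (star G)"
| "star (Or F G) = Or (star F) (star G)"
| "star (Imp F G) = And (Imp (star F) (star G)) (Imp F G)"

text \<open>A rule  a <- B, N, LC : head (None = bottom), positive body B,
  atoms c of the negative literals  not c  in N, theory atoms LC.\<close>
type_synonym ('p, 't) rule = "'p option \<times> 'p list \<times> 'p list \<times> 't list"
type_synonym ('p, 't) prog = "('p, 't) rule list"

definition rhead :: "('p, 't) rule \<Rightarrow> 'p option" where "rhead r = fst r"
definition rpos :: "('p, 't) rule \<Rightarrow> 'p list" where "rpos r = fst (snd r)"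
definition rneg :: "('p, 't) rule \<Rightarrow> 'p list" where "rneg r = fst (snd (snd r))"
definition rlc :: "('p, 't) rule \<Rightarrow> 't list" where "rlc r = snd (snd (snd r))"

definition head_fm :: "'p option \<Rightarrow> ('p, 't) atm fm" where
  "head_fm h = (case h of None \<Rightarrow> Bot | Some a \<Rightarrow> Atom (PA a))"

definition B_fm :: "('p, 't) rule \<Rightarrow> ('p, 't) atm fm" where
  "B_fm r = conj_list (map (\<lambda>b. Atom (PA b)) (rpos r))"
definition N_fm :: "('p, 't) rule \<Rightarrow> ('p, 't) atm fm" where
  "N_fm r = conj_list (map (\<lambda>c. Neg (Atom (PA c))) (rneg r))"
definition LC_fm :: "('p, 't) rule \<Rightarrow> ('p, 't) atm fm" where
  "LC_fm r = conj_list (map (\<lambda>t. Atom (TA t)) (rlc r))"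

definition rule_fm :: "('p, 't) rule \<Rightarrow> ('p, 't) atm fm" where
  "rule_fm r = Imp (And (B_fm r) (And (N_fm r) (LC_fm r))) (head_fm (rhead r))"

definition prog_fm :: "('p, 't) prog \<Rightarrow> ('p, 't) atm fm" where
  "prog_fm \<Pi> = conj_list (map rule_fm \<Pi>)"

definition patoms :: "('p, 't) prog \<Rightarrow> 'p set" where
  "patoms \<Pi> = (\<Union>r\<in>set \<Pi>. set_option (rhead r) \<union> set (rpos r) \<union> set (rneg r))"

definition tatoms :: "('p, 't) prog \<Rightarrow> 't set" where
  "tatoms \<Pi> = (\<Union>r\<in>set \<Pi>. set (rlc r))"

text \<open><Ifn, X> |=_bg SM[Pi; sigma^p]: the background interpretation is the standard
  structure of the sort 'n, so a theory atom t is true iff lc_holds Ifn t.  The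
  predicate variables p-hat range over subsets Y of the atoms; hat(c) < c means
  Y is a subset of X different from X.\<close>
definition sm_sat :: "('p, ('c, 'n::linordered_idom) lc) prog \<Rightarrow> ('c \<Rightarrow> 'n) \<Rightarrow> 'p set \<Rightarrow> bool" where
  "sm_sat \<Pi> Ifn X \<longleftrightarrow>
     eval (lc_holds Ifn) X X (prog_fm \<Pi>) \<and>
     \<not> (\<exists>Y. Y \<subseteq> X \<and> Y \<noteq> X \<and> eval (lc_holds Ifn) X Y (star (prog_fm \<Pi>)))"

definition ljn_interp :: "('p, ('c, 'n::linordered_idom) lc) prog \<Rightarrow> 'p set \<Rightarrow> ('c, 'n) lc set \<Rightarrow> bool" where
  "ljn_interp \<Pi> X T \<longleftrightarrow> X \<subseteq> patoms \<Pi> \<and> T \<subseteq> tatoms \<Pi> \<and>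
     (\<exists>Ifn::'c \<Rightarrow> 'n. \<forall>t\<in>tatoms \<Pi>. lc_holds Ifn t \<longleftrightarrow> t \<in> T)"

definition ljn_sat :: "'p set \<Rightarrow> 't set \<Rightarrow> ('p, 't) atm fm \<Rightarrow> bool" where
  "ljn_sat X T F = eval (\<lambda>t. t \<in> T) X X F"

definition ljn_reduct :: "('p, 't) prog \<Rightarrow> 'p set \<Rightarrow> 't set \<Rightarrow> ('p, 't) prog" where
  "ljn_reduct \<Pi> X T =
     map (\<lambda>r. (rhead r, rpos r, [], []))
       (filter (\<lambda>r. ljn_sat X T (And (N_fm r) (LC_fm r))) \<Pi>)"

definition pos_sat :: "'p set \<Rightarrow> ('p, 't) prog \<Rightarrow> bool" where
  "pos_sat Z P \<longleftrightarrow> (\<forall>r\<in>set P. set (rpos r) \<subseteq> Z \<longrightarrow>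
       (case rhead r of None \<Rightarrow> False | Some a \<Rightarrow> a \<in> Z))"

definition ljn_answer_set :: "('p, ('c, 'n::linordered_idom) lc) prog \<Rightarrow> 'p set \<Rightarrow> ('c, 'n) lc set \<Rightarrow> bool" where
  "ljn_answer_set \<Pi> X T \<longleftrightarrow>
     ljn_interp \<Pi> X T \<and> ljn_sat X T (prog_fm \<Pi>) \<and>
     pos_sat X (ljn_reduct \<Pi> X T) \<and>
     (\<forall>Z. pos_sat Z (ljn_reduct \<Pi> X T) \<longrightarrow> X \<subseteq> Z)"

end

theory Submission
  imports Defs
begin

definition hd_in :: "'p option \<Rightarrow> 'p set \<Rightarrow> bool" where
  "hd_in h S = (case h of None \<Rightarrow> False | Some a \<Rightarrow> a \<in> S)"

lemma hd_in_Int: "hd_in h (A \<inter> B) = (hd_in h A \<and> hd_in h B)"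
  by (cases h) (auto simp: hd_in_def)

lemma eval_conj_list: "eval Tv X Y (conj_list Fs) \<longleftrightarrow> (\<forall>F\<in>set Fs. eval Tv X Y F)"
  by (induction Fs rule: conj_list.induct) (auto simp: Top_def Neg_def)

lemma eval_star_conj_list: "eval Tv X Y (star (conj_list Fs)) \<longleftrightarrow> (\<forall>F\<in>set Fs. eval Tv X Y (star F))"
  by (induction Fs rule: conj_list.induct) (auto simp: Top_def Neg_def)

lemma rule_eval: "eval Tv X X (rule_fm r) \<longleftrightarrow>
   (set (rpos r) \<subseteq> X \<and> (\<forall>c\<in>set (rneg r). c \<notin> X) \<and> (\<forall>t\<in>set (rlc r). Tv t) \<longrightarrow>
     hd_in (rhead r) X)"
  by (auto simp: rule_fm_def B_fm_def N_fm_def LC_fm_def head_fm_def eval_conj_list Neg_def hd_in_def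
      split: option.splits)

lemma rule_star: "Y \<subseteq> X \<Longrightarrow> eval Tv X Y (star (rule_fm r)) \<longleftrightarrow> eval Tv X X (rule_fm r) \<and>
   (set (rpos r) \<subseteq> Y \<and> (\<forall>c\<in>set (rneg r). c \<notin> X) \<and> (\<forall>t\<in>set (rlc r). Tv t) \<longrightarrow>
     hd_in (rhead r) Y)"
  unfolding rule_fm_def B_fm_def N_fm_def LC_fm_def head_fm_def
  by (auto simp: eval_star_conj_list eval_conj_list Neg_def hd_in_def split: option.splits)

lemma NLC: "ljn_sat X T (And (N_fm r) (LC_fm r)) \<longleftrightarrow>
    (\<forall>c\<in>set (rneg r). c \<notin> X) \<and> (\<forall>t\<in>set (rlc r). t \<in> T)"
  by (auto simp: ljn_sat_def N_fm_def LC_fm_def eval_conj_list Neg_def)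

lemma pos_sat_red: "pos_sat Z (ljn_reduct \<Pi> X T) \<longleftrightarrow>
   (\<forall>r\<in>set \<Pi>. (\<forall>c\<in>set (rneg r). c \<notin> X) \<and> (\<forall>t\<in>set (rlc r). t \<in> T) \<longrightarrow>
      set (rpos r) \<subseteq> Z \<longrightarrow> hd_in (rhead r) Z)"
proof -
  have h: "\<And>r. rhead (rhead r, rpos r, [], []) = rhead r" "\<And>r. rpos (rhead r, rpos r, [], []) = rpos r"
    by (simp_all add: rhead_def rpos_def)
  have ps: "\<And>Z P. pos_sat Z P \<longleftrightarrow> (\<forall>r\<in>set P. set (rpos r) \<subseteq> Z \<longrightarrow> hd_in (rhead r) Z)"
    by (simp add: pos_sat_def hd_in_def)
  show ?thesis
    unfolding ps ljn_reduct_def set_map set_filter ball_simps(9) mem_Collect_eq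
    by (simp only: h NLC Ball_def mem_Collect_eq) blast
qed

lemma prog_eval: "eval Tv X X (prog_fm \<Pi>) \<longleftrightarrow> (\<forall>r\<in>set \<Pi>. eval Tv X X (rule_fm r))"
  by (simp add: prog_fm_def eval_conj_list)

lemma prog_star: "eval Tv X Y (star (prog_fm \<Pi>)) \<longleftrightarrow> (\<forall>r\<in>set \<Pi>. eval Tv X Y (star (rule_fm r)))"
  by (simp add: prog_fm_def eval_star_conj_list)

lemma rlc_tatoms: "r \<in> set \<Pi> \<Longrightarrow> t \<in> set (rlc r) \<Longrightarrow> t \<in> tatoms \<Pi>"
  by (auto simp: tatoms_def)

lemma rule_eval_cong: "(\<And>t. t \<in> set (rlc r) \<Longrightarrow> Tv t = Tv' t) \<Longrightarrow>
   eval Tv X X (rule_fm r) = eval Tv' X X (rule_fm r)"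
  unfolding rule_eval by simp

theorem theorem4:
  fixes \<Pi> :: "('p, ('c, 'n::linordered_idom) lc) prog"
  shows "(\<forall>X T (Ifn::'c \<Rightarrow> 'n). ljn_answer_set \<Pi> X T \<and>
            (\<forall>t\<in>tatoms \<Pi>. lc_holds Ifn t \<longleftrightarrow> t \<in> T)
            \<longrightarrow> sm_sat \<Pi> Ifn X)
       \<and> (\<forall>(Ifn::'c \<Rightarrow> 'n) X. X \<subseteq> patoms \<Pi> \<and> sm_sat \<Pi> Ifn X
            \<longrightarrow> ljn_answer_set \<Pi> X {t \<in> tatoms \<Pi>. lc_holds Ifn t})"
proof (intro conjI allI impI; elim conjE)
  fix X T and Ifn :: "'c \<Rightarrow> 'n"
  assume A: "ljn_answer_set \<Pi> X T" and E: "\<forall>t\<in>tatoms \<Pi>. lc_holds Ifn t \<longleftrightarrow> t \<in> T"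
  have EE: "lc_holds Ifn t \<longleftrightarrow> t \<in> T" if "r \<in> set \<Pi>" "t \<in> set (rlc r)" for r t
    using E rlc_tatoms[OF that] by blast
  from A have S: "\<forall>r\<in>set \<Pi>. eval (\<lambda>t. t \<in> T) X X (rule_fm r)"
    and M: "\<And>Z. pos_sat Z (ljn_reduct \<Pi> X T) \<Longrightarrow> X \<subseteq> Z"
    unfolding ljn_answer_set_def ljn_sat_def prog_eval by blast+
  have S2: "\<forall>r\<in>set \<Pi>. eval (lc_holds Ifn) X X (rule_fm r)"
  proof
    fix r assume r: "r \<in> set \<Pi>"
    have "eval (\<lambda>t. t \<in> T) X X (rule_fm r) = eval (lc_holds Ifn) X X (rule_fm r)"
      by (rule rule_eval_cong) (simp add: EE[OF r])
    then show "eval (lc_holds Ifn) X X (rule_fm r)" using S r by blast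
  qed
  show "sm_sat \<Pi> Ifn X"
    unfolding sm_sat_def
  proof (intro conjI notI)
    show "eval (lc_holds Ifn) X X (prog_fm \<Pi>)" using S2 by (simp add: prog_eval)
  next
    assume "\<exists>Y\<subseteq>X. Y \<noteq> X \<and> eval (lc_holds Ifn) X Y (star (prog_fm \<Pi>))"
    then obtain Y where Y: "Y \<subseteq> X" "Y \<noteq> X" "eval (lc_holds Ifn) X Y (star (prog_fm \<Pi>))" by blast
    have "pos_sat Y (ljn_reduct \<Pi> X T)"
      unfolding pos_sat_red
    proof (intro ballI impI)
      fix r assume r: "r \<in> set \<Pi>" and c: "(\<forall>c\<in>set (rneg r). c \<notin> X) \<and> (\<forall>t\<in>set (rlc r). t \<in> T)"
        and p: "set (rpos r) \<subseteq> Y"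
      have st: "eval (lc_holds Ifn) X Y (star (rule_fm r))" using Y(3) r by (simp add: prog_star)
      have "set (rpos r) \<subseteq> Y \<and> (\<forall>c\<in>set (rneg r). c \<notin> X) \<and> (\<forall>t\<in>set (rlc r). lc_holds Ifn t) \<longrightarrow>
          hd_in (rhead r) Y"
        using st[unfolded rule_star[OF Y(1)]] by (rule conjunct2)
      moreover have "\<forall>t\<in>set (rlc r). lc_holds Ifn t" using c by (simp add: EE[OF r])
      ultimately show "hd_in (rhead r) Y"
        using c p by blast
    qed
    then have "X \<subseteq> Y" by (rule M)
    then have "Y = X" by (rule subset_antisym[OF Y(1)])
    with Y(2) show False by (rule notE)
  qed
next
  fix X and Ifn :: "'c \<Rightarrow> 'n"
  assume P: "X \<subseteq> patoms \<Pi>" and SM: "sm_sat \<Pi> Ifn X"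
  define T where "T = {t \<in> tatoms \<Pi>. lc_holds Ifn t}"
  have EE: "lc_holds Ifn t \<longleftrightarrow> t \<in> T" if "r \<in> set \<Pi>" "t \<in> set (rlc r)" for r t
    using rlc_tatoms[OF that] unfolding T_def by blast
  from SM have S2: "\<forall>r\<in>set \<Pi>. eval (lc_holds Ifn) X X (rule_fm r)"
    and NY: "\<And>Y. Y \<subseteq> X \<Longrightarrow> eval (lc_holds Ifn) X Y (star (prog_fm \<Pi>)) \<Longrightarrow> Y = X"
    unfolding sm_sat_def prog_eval by blast+
  have S: "\<forall>r\<in>set \<Pi>. eval (\<lambda>t. t \<in> T) X X (rule_fm r)"
  proof
    fix r assume r: "r \<in> set \<Pi>"
    have "eval (\<lambda>t. t \<in> T) X X (rule_fm r) = eval (lc_holds Ifn) X X (rule_fm r)"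
      by (rule rule_eval_cong) (simp add: EE[OF r])
    then show "eval (\<lambda>t. t \<in> T) X X (rule_fm r)" using S2 r by blast
  qed
  have "ljn_interp \<Pi> X T"
    unfolding ljn_interp_def T_def using P by blast
  moreover have "ljn_sat X T (prog_fm \<Pi>)" using S by (simp add: ljn_sat_def prog_eval)
  moreover have "pos_sat X (ljn_reduct \<Pi> X T)"
    unfolding pos_sat_red
  proof (intro ballI impI)
    fix r assume r: "r \<in> set \<Pi>" and c: "(\<forall>c\<in>set (rneg r). c \<notin> X) \<and> (\<forall>t\<in>set (rlc r). t \<in> T)"
      and p: "set (rpos r) \<subseteq> X"
    have "eval (\<lambda>t. t \<in> T) X X (rule_fm r)" using S r by blast
    then show "hd_in (rhead r) X"
      unfolding rule_eval using c p by blast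
  qed
  moreover have "\<forall>Z. pos_sat Z (ljn_reduct \<Pi> X T) \<longrightarrow> X \<subseteq> Z"
  proof (intro allI impI)
    fix Z assume Z: "pos_sat Z (ljn_reduct \<Pi> X T)"
    let ?Y = "Z \<inter> X"
    have "eval (lc_holds Ifn) X ?Y (star (prog_fm \<Pi>))"
      unfolding prog_star
    proof
      fix r assume r: "r \<in> set \<Pi>"
      have R: "eval (lc_holds Ifn) X X (rule_fm r)" using S2 r by blast
      have Zr: "(\<forall>c\<in>set (rneg r). c \<notin> X) \<and> (\<forall>t\<in>set (rlc r). t \<in> T) \<longrightarrow>
          set (rpos r) \<subseteq> Z \<longrightarrow> hd_in (rhead r) Z"
        using Z r unfolding pos_sat_red by blast
      have R': "set (rpos r) \<subseteq> X \<and> (\<forall>c\<in>set (rneg r). c \<notin> X) \<and> (\<forall>t\<in>set (rlc r). lc_holds Ifn t) \<longrightarrow>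
          hd_in (rhead r) X" using R unfolding rule_eval .
      have "set (rpos r) \<subseteq> ?Y \<and> (\<forall>c\<in>set (rneg r). c \<notin> X) \<and> (\<forall>t\<in>set (rlc r). lc_holds Ifn t) \<longrightarrow>
          hd_in (rhead r) ?Y"
      proof
        assume H: "set (rpos r) \<subseteq> ?Y \<and> (\<forall>c\<in>set (rneg r). c \<notin> X) \<and> (\<forall>t\<in>set (rlc r). lc_holds Ifn t)"
        then have "\<forall>t\<in>set (rlc r). t \<in> T" by (simp add: EE[OF r])
        then have hz: "hd_in (rhead r) Z" using Zr H by blast
        have hx: "hd_in (rhead r) X" using R' H by blast
        show "hd_in (rhead r) ?Y"
          using hz hx unfolding hd_in_Int by (rule conjI)
      qed
      with R show "eval (lc_holds Ifn) X ?Y (star (rule_fm r))"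
        unfolding rule_star[of ?Y X "lc_holds Ifn" r, OF Int_lower2] by (rule conjI)
    qed
    then have "?Y = X" using NY[OF Int_lower2] by blast
    then show "X \<subseteq> Z" by (rule equalityD2[THEN subset_trans]) (rule Int_lower1)
  qed
  ultimately show "ljn_answer_set \<Pi> X {t \<in> tatoms \<Pi>. lc_holds Ifn t}"
    unfolding ljn_answer_set_def T_def by blast
qed

end
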